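(* Let $\mathcal{X}$ be a measurable space of inputs and let $P_{\mathrm{ben}}$ and $P_{\mathrm{bd}}$ be two probability distributions on $\mathcal{X}$. Let $x \mapsto S(x) \in \mathbb{R}^{n\times m}$ and $x \mapsto V(x) \in \mathbb{R}^{m\times d_v}$ be measurable maps. For $\lambda \in \mathbb{R}$ define $$R^{\lambda}(x) := \operatorname{softmax}(\lambda S(x))\,V(x) \in \mathbb{R}^{n\times d_v},$$ where the softmax is applied row-wise, so that $R^{1}(x)=\operatorname{softmax}(S(x))V(x)$. Define the scaling-induced response shift $$D(x;\lambda) := \operatorname{MSE}\big(R^{\lambda}(x), R^{1}(x)\big) = \frac{1}{N}\,\big\|R^{\lambda}(x)-R^{1}(x)\big\|_F^2, \qquad N := n\,d_v,$$ and for $c\in\{\mathrm{ben},\mathrm{bd}\}$ the class-wise mean curve $\bar D_c(\lambda) := \mathbb{E}_{x\sim P_c}[D(x;\lambda)]$. Assume there exist $\delta>0$ and measurable functions $M_1, M_2:\mathcal{X}\to[0,\infty)$ such that, for each $c\in\{\mathrm{ben},\mathrm{bd}\}$ and $P_c$-almost every $x$, and for all $\lambda\in(1-\delta,1+\delta)$, $$\Big\|\tfrac{\partial R^{\lambda}(x)}{\partial\lambda}\Big\|_F \le M_1(x), \qquad \Big\|\tfrac{\partial^2 R^{\lambda}(x)}{\partial\lambda^2}\Big\|_F \le M_2(x),$$ and $\mathbb{E}_{x\sim P_c}\big[M_1(x)^2+M_2(x)^2\big]<\infty$ for $c\in\{\mathrm{ben},\mathrm{bd}\}$. Then there exist finite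 constants $\Gamma_{\mathrm{ben}}$ and $\Gamma_{\mathrm{bd}}$ such that for each $c\in\{\mathrm{ben},\mathrm{bd}\}$, $$\bar D_c(\lambda) = \Gamma_c(\lambda-1)^2 + o\big((\lambda-1)^2\big) \qquad \text{as } \lambda\to 1.$$ Moreover, if $\Gamma_{\mathrm{ben}}\neq\Gamma_{\mathrm{bd}}$, then there exists $\epsilon>0$ such that $\bar D_{\mathrm{bd}}(\lambda)\neq \bar D_{\mathrm{ben}}(\lambda)$ for all $\lambda$ with $0<|\lambda-1|<\epsilon$.
   Context: This models a single cross-attention layer at a fixed denoising step of a text-to-image diffusion model: $S(x)$ is the attention score matrix for input prompt $x$, $V(x)$ the value matrix, and $\lambda$ a scaling factor applied to the attention scores. $P_{\mathrm{ben}}$ and $P_{\mathrm{bd}}$ are the benign and backdoor input distributions. The row-wise softmax of a row vector $s\in\mathbb{R}^m$ is $\operatorname{softmax}(s)_j = e^{s_j}/\sum_{k} e^{s_k}$. $\|\cdot\|_F$ is the Frobenius norm. *)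

theory Defs
  imports "HOL-Probability.Probability" "HOL-Library.Landau_Symbols"
begin

definition softmax_row :: "real ^ 'm \<Rightarrow> real ^ 'm" where
  "softmax_row s = (\<chi> j. exp (s $ j) / (\<Sum>k\<in>UNIV. exp (s $ k)))"

definition softmax_rows :: "real ^ 'm ^ 'n \<Rightarrow> real ^ 'm ^ 'n" where
  "softmax_rows A = (\<chi> i. softmax_row (A $ i))"

definition resp :: "('x \<Rightarrow> real ^ 'm ^ 'n) \<Rightarrow> ('x \<Rightarrow> real ^ 'dv ^ 'm) \<Rightarrow> real \<Rightarrow> 'x \<Rightarrow> real ^ 'dv ^ 'n" where
  "resp S V lam x = softmax_rows (lam *\<^sub>R S x) ** V x"

text \<open>Response shift D(x;lambda) = (1/(n dv)) ||R^lambda(x) - R^1(x)||_F^2.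
  The norm on real^'dv^'n is the Euclidean (Frobenius) norm.\<close>
definition shift :: "('x \<Rightarrow> real ^ 'm ^ 'n) \<Rightarrow> ('x \<Rightarrow> real ^ 'dv ^ 'm) \<Rightarrow> 'x \<Rightarrow> real \<Rightarrow> real" where
  "shift S V x lam = (norm (resp S V lam x - resp S V 1 x))\<^sup>2 / (real CARD('n) * real CARD('dv))"

definition mean_shift :: "'x measure \<Rightarrow> ('x \<Rightarrow> real ^ 'm ^ 'n) \<Rightarrow> ('x \<Rightarrow> real ^ 'dv ^ 'm) \<Rightarrow> real \<Rightarrow> real" where
  "mean_shift P S V lam = (\<integral>x. shift S V x lam \<partial>P)"

end

theory Submission
  imports Defs
begin

lemma sum_delta_mult: fixes f :: "'a::finite \<Rightarrow> real" shows "(\<Sum>j\<in>UNIV. (f j::real) * (if b = j then 1 else 0)) = f b"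
proof -
  have "(\<Sum>j\<in>UNIV. (f j::real) * (if b = j then 1 else 0)) = (\<Sum>j\<in>UNIV. if b = j then f j else 0)"
    by (rule sum.cong) auto
  then show ?thesis by simp
qed

lemma vec2_expand: "(v::real^'k^'n) = (\<Sum>i\<in>UNIV. \<Sum>j\<in>UNIV. v$i$j *\<^sub>R axis i (axis j 1))"
proof -
  have "(\<Sum>i\<in>UNIV. \<Sum>j\<in>UNIV. v$i$j *\<^sub>R axis i (axis j (1::real))) $ a $ b = v$a$b" for a b
  proof -
    have "(\<Sum>i\<in>UNIV. \<Sum>j\<in>UNIV. v$i$j *\<^sub>R axis i (axis j (1::real))) $ a $ b
       = (\<Sum>i\<in>UNIV. \<Sum>j\<in>UNIV. (v$i$j *\<^sub>R axis i (axis j (1::real))) $ a $ b)"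
      by (simp only: sum_component)
    also have "\<dots> = (\<Sum>i\<in>UNIV. if i = a then (\<Sum>j\<in>UNIV. if j = b then v$i$j else 0) else 0)"
      by (intro sum.cong refl) (auto simp: axis_def sum_delta_mult)
    also have "\<dots> = v$a$b" by simp
    finally show ?thesis .
  qed
  then show ?thesis by (simp add: vec_eq_iff)
qed

lemma hvd_comp:
  fixes F :: "real \<Rightarrow> real^'k^'n"
  assumes "\<And>i j. ((\<lambda>t. F t $ i $ j) has_real_derivative F' $ i $ j) (at t)"
  shows "(F has_vector_derivative F') (at t)"
proof -
  have "((\<lambda>t. \<Sum>i\<in>UNIV. \<Sum>j\<in>UNIV. F t$i$j *\<^sub>R axis i (axis j 1)) has_vector_derivative
     (\<Sum>i\<in>UNIV. \<Sum>j\<in>UNIV. F'$i$j *\<^sub>R axis i (axis j (1::real)))) (at t)"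
    by (intro has_vector_derivative_sum) (use assms in \<open>auto intro!: derivative_eq_intros\<close>)
  then show ?thesis using vec2_expand[of F'] vec2_expand[symmetric, of "F _"] by simp
qed

lemma norm2_vec2: "(norm (v::real^'k^'n))\<^sup>2 = (\<Sum>i\<in>UNIV. \<Sum>j\<in>UNIV. (v$i$j)\<^sup>2)"
  unfolding power2_norm_eq_inner inner_vec_def inner_real_def by (simp add: power2_eq_square)

lemma resp_comp: "resp S V t x $ i $ k = (\<Sum>j\<in>UNIV. exp (t * S x $ i $ j) / (\<Sum>l\<in>UNIV. exp (t * S x $ i $ l)) * V x $ j $ k)"
  by (simp add: resp_def softmax_rows_def softmax_row_def matrix_matrix_mult_def)

definition Zs :: "real^'m \<Rightarrow> real \<Rightarrow> real" where
  "Zs s t = (\<Sum>l\<in>UNIV. exp (t * s$l))"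
definition pr :: "real^'m \<Rightarrow> real \<Rightarrow> 'm \<Rightarrow> real" where
  "pr s t j = exp (t * s$j) / Zs s t"
definition mu :: "real^'m \<Rightarrow> real \<Rightarrow> real" where
  "mu s t = (\<Sum>l\<in>UNIV. pr s t l * s$l)"
definition pr1 :: "real^'m \<Rightarrow> real \<Rightarrow> 'm \<Rightarrow> real" where
  "pr1 s t j = pr s t j * (s$j - mu s t)"
definition mu1 :: "real^'m \<Rightarrow> real \<Rightarrow> real" where
  "mu1 s t = (\<Sum>l\<in>UNIV. pr1 s t l * s$l)"
definition pr2 :: "real^'m \<Rightarrow> real \<Rightarrow> 'm \<Rightarrow> real" where
  "pr2 s t j = pr1 s t j * (s$j - mu s t) - pr s t j * mu1 s t"

lemma Zs_pos: "Zs s t > 0"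
  unfolding Zs_def by (intro sum_pos) auto

lemma DERIV_Zs: "((\<lambda>t. Zs s t) has_real_derivative (\<Sum>l\<in>UNIV. exp (t * s$l) * s$l)) (at t)"
  unfolding Zs_def by (auto intro!: derivative_eq_intros)

lemma DERIV_pr: "((\<lambda>t. pr s t j) has_real_derivative pr1 s t j) (at t)"
proof -
  have Z: "Zs s t \<noteq> 0" using Zs_pos[of s t] by simp
  have "((\<lambda>t. exp (t * s$j) / Zs s t) has_real_derivative
     (exp (t * s$j) * s$j * Zs s t - exp (t * s$j) * (\<Sum>l\<in>UNIV. exp (t * s$l) * s$l)) / (Zs s t * Zs s t)) (at t)"
    by (rule DERIV_divide[OF _ DERIV_Zs Z]) (auto intro!: derivative_eq_intros)
  moreover have "(exp (t * s$j) * s$j * Zs s t - exp (t * s$j) * (\<Sum>l\<in>UNIV. exp (t * s$l) * s$l)) / (Zs s t * Zs s t)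
     = pr1 s t j"
    unfolding pr1_def mu_def pr_def using Z
    by (simp add: sum_divide_distrib[symmetric] field_simps)
  ultimately show ?thesis unfolding pr_def by simp
qed

lemma DERIV_mu: "((\<lambda>t. mu s t) has_real_derivative mu1 s t) (at t)"
  unfolding mu_def mu1_def by (auto intro!: derivative_eq_intros DERIV_pr)

lemma DERIV_pr1: "((\<lambda>t. pr1 s t j) has_real_derivative pr2 s t j) (at t)"
  unfolding pr1_def[abs_def] pr2_def
  by (auto intro!: derivative_eq_intros DERIV_pr DERIV_mu simp: pr1_def algebra_simps)

lemma mvt_bound_lt:
  fixes f :: "real \<Rightarrow> 'a::real_inner"
  assumes "a < b" "\<And>t. t \<in> {a..b} \<Longrightarrow> (f has_vector_derivative f' t) (at t)"
    "\<And>t. t \<in> {a..b} \<Longrightarrow> norm (f' t) \<le> B"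
  shows "norm (f b - f a) \<le> B * \<bar>b - a\<bar>"
proof -
  have cont: "continuous_on {a..b} f"
    using assms(2) by (intro continuous_on_vector_derivative) (auto intro: has_vector_derivative_at_within)
  obtain x where x: "x \<in> {a<..<b}" and le: "norm (f b - f a) \<le> norm ((b - a) *\<^sub>R f' x)"
    using mvt_general[OF assms(1) cont, of "\<lambda>x h. h *\<^sub>R f' x"] assms(2)
    unfolding has_vector_derivative_def by force
  have "norm ((b - a) *\<^sub>R f' x) = \<bar>b - a\<bar> * norm (f' x)" by simp
  also have "\<dots> \<le> \<bar>b - a\<bar> * B" using assms(3)[of x] x by (intro mult_left_mono) auto
  finally show ?thesis using le by (simp add: mult.commute)
qed

lemma mvt_bound:
  fixes f :: "real \<Rightarrow> 'a::real_inner"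
  assumes "\<And>t. t \<in> {min a b..max a b} \<Longrightarrow> (f has_vector_derivative f' t) (at t)"
    "\<And>t. t \<in> {min a b..max a b} \<Longrightarrow> norm (f' t) \<le> B"
  shows "norm (f b - f a) \<le> B * \<bar>b - a\<bar>"
proof (cases a b rule: linorder_cases)
  case less
  then show ?thesis using mvt_bound_lt[of a b f f' B] assms by auto
next
  case equal
  then show ?thesis by simp
next
  case greater
  then have "norm (f a - f b) \<le> B * \<bar>a - b\<bar>" using mvt_bound_lt[of b a f f' B] assms by auto
  then show ?thesis by (simp add: norm_minus_commute abs_minus_commute)
qed

lemma pointwise:
  fixes f g g2 :: "real \<Rightarrow> 'a::real_inner"
  assumes df: "\<And>t. (f has_vector_derivative g t) (at t)"
    and dg: "\<And>t. (g has_vector_derivative g2 t) (at t)"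
    and bd: "\<And>u. u \<in> {1-\<delta><..<1+\<delta>} \<Longrightarrow> norm (g u) \<le> A \<and> norm (g2 u) \<le> B"
    and l: "\<bar>l - 1\<bar> < \<delta>"
  shows "norm (f l - f 1) \<le> A * \<bar>l - 1\<bar>"
    and "\<bar>(norm (f l - f 1))\<^sup>2 - (l - 1)\<^sup>2 * (norm (g 1))\<^sup>2\<bar> \<le> 2 * A * B * \<bar>l - 1\<bar>^3 + B\<^sup>2 * (l - 1)^4"
proof -
  have sub: "u \<in> {1-\<delta><..<1+\<delta>}" if "u \<in> {min 1 l..max 1 l}" for u
    using that l by auto
  show "norm (f l - f 1) \<le> A * \<bar>l - 1\<bar>"
    by (rule mvt_bound[of 1 l f g A]) (use df bd sub in auto)
  have d0: "0 < \<delta>" using l by linarith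
  have A0: "norm (g 1) \<le> A" and B0: "0 \<le> B" using bd[of 1] d0 by (auto intro: order_trans[OF norm_ge_zero])
  define h where "h u = f u - f 1 - (u - 1) *\<^sub>R g 1" for u
  have dh: "(h has_vector_derivative (g u - g 1)) (at u)" for u
    unfolding h_def using df[of u] by (auto intro!: derivative_eq_intros)
  have gb: "norm (g u - g 1) \<le> B * \<bar>l - 1\<bar>" if "u \<in> {min 1 l..max 1 l}" for u
  proof -
    have "norm (g u - g 1) \<le> B * \<bar>u - 1\<bar>"
    proof (rule mvt_bound[of 1 u g g2 B])
      fix t assume "t \<in> {min 1 u..max 1 u}"
      then have "t \<in> {min 1 l..max 1 l}" using that by auto
      then show "norm (g2 t) \<le> B" using bd sub by blast
    qed (use dg in auto)
    also have "\<dots> \<le> B * \<bar>l - 1\<bar>"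
      using that B0 by (intro mult_left_mono) auto
    finally show ?thesis .
  qed
  have hb: "norm (h l - h 1) \<le> (B * \<bar>l - 1\<bar>) * \<bar>l - 1\<bar>"
    by (rule mvt_bound[of 1 l h "\<lambda>u. g u - g 1"]) (use dh gb in auto)
  have h1: "h 1 = 0" unfolding h_def by simp
  define a where "a = (l - 1) *\<^sub>R g 1"
  define r where "r = h l"
  have fe: "f l - f 1 = a + r" unfolding a_def r_def h_def by simp
  have rb: "norm r \<le> B * (l - 1)\<^sup>2" using hb h1 unfolding r_def by (simp add: power2_eq_square abs_mult_self_eq)
  have ab: "norm a \<le> A * \<bar>l - 1\<bar>" unfolding a_def using A0
    by (simp add: mult_right_mono flip: mult.commute)
  have eq1: "(norm (a + r))\<^sup>2 = (norm a)\<^sup>2 + 2 * (a \<bullet> r) + (norm r)\<^sup>2"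
    by (simp add: power2_norm_eq_inner inner_add_left inner_add_right inner_commute)
  have eq2: "(norm a)\<^sup>2 = (l - 1)\<^sup>2 * (norm (g 1))\<^sup>2" unfolding a_def by (simp add: power_mult_distrib)
  have in3: "\<bar>2 * (a \<bullet> r)\<bar> \<le> 2 * A * B * \<bar>l - 1\<bar>^3"
  proof -
    have "\<bar>a \<bullet> r\<bar> \<le> norm a * norm r" by (rule Cauchy_Schwarz_ineq2)
    also have "\<dots> \<le> (A * \<bar>l - 1\<bar>) * (B * (l - 1)\<^sup>2)"
    proof -
      have "0 \<le> A" using A0 norm_ge_zero order_trans by blast
      then show ?thesis using B0 by (intro mult_mono ab rb) auto
    qed
    also have "\<dots> = A * B * \<bar>l - 1\<bar>^3"
    proof -
      have sq: "(l - 1)\<^sup>2 = \<bar>l - 1\<bar>\<^sup>2" by simp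
      show ?thesis unfolding sq by (simp add: power2_eq_square power3_eq_cube algebra_simps)
    qed
    finally show ?thesis by simp
  qed
  have in4: "(norm r)\<^sup>2 \<le> B\<^sup>2 * (l - 1)^4"
  proof -
    have "(norm r)\<^sup>2 \<le> (B * (l - 1)\<^sup>2)\<^sup>2" by (rule power_mono[OF rb]) auto
    then show ?thesis by (simp add: power_mult_distrib power_mult[symmetric])
  qed
  have e12: "(norm (a + r))\<^sup>2 - (l - 1)\<^sup>2 * (norm (g 1))\<^sup>2 = 2 * (a \<bullet> r) + (norm r)\<^sup>2"
    using eq1 eq2 by simp
  have "\<bar>(norm (a + r))\<^sup>2 - (l - 1)\<^sup>2 * (norm (g 1))\<^sup>2\<bar> \<le> \<bar>2 * (a \<bullet> r)\<bar> + \<bar>(norm r)\<^sup>2\<bar>"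
    unfolding e12 by (rule abs_triangle_ineq)
  then show "\<bar>(norm (f l - f 1))\<^sup>2 - (l - 1)\<^sup>2 * (norm (g 1))\<^sup>2\<bar> \<le> 2 * A * B * \<bar>l - 1\<bar>^3 + B\<^sup>2 * (l - 1)^4"
    unfolding fe using in3 in4 by simp
qed

definition G :: "('x \<Rightarrow> real ^ 'm ^ 'n) \<Rightarrow> ('x \<Rightarrow> real ^ 'dv ^ 'm) \<Rightarrow> real \<Rightarrow> 'x \<Rightarrow> real ^ 'dv ^ 'n" where
  "G S V t x = (\<chi> i k. \<Sum>j\<in>UNIV. pr1 (S x $ i) t j * V x $ j $ k)"
definition G2 :: "('x \<Rightarrow> real ^ 'm ^ 'n) \<Rightarrow> ('x \<Rightarrow> real ^ 'dv ^ 'm) \<Rightarrow> real \<Rightarrow> 'x \<Rightarrow> real ^ 'dv ^ 'n" where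
  "G2 S V t x = (\<chi> i k. \<Sum>j\<in>UNIV. pr2 (S x $ i) t j * V x $ j $ k)"

lemma resp_pr: "resp S V t x $ i $ k = (\<Sum>j\<in>UNIV. pr (S x $ i) t j * V x $ j $ k)"
  by (simp add: resp_comp pr_def Zs_def)

lemma hvd_resp: "((\<lambda>t. resp S V t x) has_vector_derivative G S V t x) (at t)"
  by (rule hvd_comp) (auto simp: resp_pr G_def intro!: derivative_eq_intros DERIV_pr)

lemma hvd_G: "((\<lambda>t. G S V t x) has_vector_derivative G2 S V t x) (at t)"
  by (rule hvd_comp) (auto simp: G_def G2_def intro!: derivative_eq_intros DERIV_pr1)

lemma vd1: "vector_derivative (\<lambda>t. resp S V t x) (at l) = G S V l x"
  by (rule vector_derivative_at[OF hvd_resp])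

lemma vd2: "vector_derivative (\<lambda>u. vector_derivative (\<lambda>t. resp S V t x) (at u)) (at l) = G2 S V l x"
  unfolding vd1 by (rule vector_derivative_at[OF hvd_G])

lemma meas_comp:
  fixes S :: "'x \<Rightarrow> real ^ 'm ^ 'n"
  assumes "S \<in> borel_measurable M"
  shows "(\<lambda>x. S x $ i $ j) \<in> borel_measurable M"
  by (rule borel_measurable_continuous_on[OF _ assms]) (intro continuous_intros)

lemma meas_shift:
  assumes [measurable]: "S \<in> borel_measurable M" "V \<in> borel_measurable M"
  shows "(\<lambda>x. shift S V x l) \<in> borel_measurable M"
proof -
  have [measurable]: "(\<lambda>x. S x $ i $ j) \<in> borel_measurable M" "(\<lambda>x. V x $ j $ k) \<in> borel_measurable M" for i j k
    by (rule meas_comp, simp)+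
  show ?thesis
    unfolding shift_def norm2_vec2 vector_minus_component resp_comp by measurable
qed

lemma meas_G:
  assumes [measurable]: "S \<in> borel_measurable M" "V \<in> borel_measurable M"
  shows "(\<lambda>x. (norm (G S V l x))\<^sup>2) \<in> borel_measurable M"
proof -
  have [measurable]: "(\<lambda>x. S x $ i $ j) \<in> borel_measurable M" "(\<lambda>x. V x $ j $ k) \<in> borel_measurable M" for i j k
    by (rule meas_comp, simp)+
  show ?thesis
    unfolding norm2_vec2 G_def pr1_def mu_def pr_def Zs_def by simp measurable
qed

lemma core:
  fixes P :: "'x measure" and S :: "'x \<Rightarrow> real ^ 'm ^ 'n" and V :: "'x \<Rightarrow> real ^ 'dv ^ 'm"
  assumes P: "prob_space P" and mS: "S \<in> borel_measurable P" and mV: "V \<in> borel_measurable P"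
    and d: "\<delta> > 0" and m1: "M1 \<in> borel_measurable P" and m2: "M2 \<in> borel_measurable P"
    and M1p: "\<And>x. M1 x \<ge> 0" and M2p: "\<And>x. M2 x \<ge> 0"
    and AEb: "AE x in P. \<forall>l\<in>{1-\<delta><..<1+\<delta>}. norm (G S V l x) \<le> M1 x \<and> norm (G2 S V l x) \<le> M2 x"
    and int: "integrable P (\<lambda>x. (M1 x)\<^sup>2 + (M2 x)\<^sup>2)"
  shows "\<exists>\<Gamma> C. \<forall>l. \<bar>l - 1\<bar> < min \<delta> 1 \<longrightarrow> \<bar>mean_shift P S V l - \<Gamma> * (l - 1)\<^sup>2\<bar> \<le> C * \<bar>l - 1\<bar>^3"
proof -
  define N where "N = real CARD('n) * real CARD('dv)"
  have N: "N > 0" unfolding N_def by simp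
  define K where "K = (\<integral>x. (M1 x)\<^sup>2 + (M2 x)\<^sup>2 \<partial>P)"
  define \<Gamma> where "\<Gamma> = (\<integral>x. (norm (G S V 1 x))\<^sup>2 / N \<partial>P)"
  have intN: "integrable P (\<lambda>x. ((M1 x)\<^sup>2 + (M2 x)\<^sup>2) / N)" using int by simp
  have intG: "integrable P (\<lambda>x. (norm (G S V 1 x))\<^sup>2 / N)"
  proof (rule Bochner_Integration.integrable_bound[OF intN])
    show "(\<lambda>x. (norm (G S V 1 x))\<^sup>2 / N) \<in> borel_measurable P"
      using meas_G[OF mS mV] by measurable
    show "AE x in P. norm ((norm (G S V 1 x))\<^sup>2 / N) \<le> norm (((M1 x)\<^sup>2 + (M2 x)\<^sup>2) / N)"
      using AEb
    proof eventually_elim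
      case (elim x)
      then have "norm (G S V 1 x) \<le> M1 x" using d by auto
      then have "(norm (G S V 1 x))\<^sup>2 \<le> (M1 x)\<^sup>2" by (intro power_mono) auto
      then show ?case using N by (simp add: divide_right_mono add_increasing2)
    qed
  qed
  have main: "\<bar>mean_shift P S V l - \<Gamma> * (l - 1)\<^sup>2\<bar> \<le> (2 * K / N) * \<bar>l - 1\<bar>^3"
    if l: "\<bar>l - 1\<bar> < min \<delta> 1" for l
  proof -
    have ptw: "AE x in P. norm (resp S V l x - resp S V 1 x) \<le> M1 x * \<bar>l - 1\<bar> \<and>
       \<bar>(norm (resp S V l x - resp S V 1 x))\<^sup>2 - (l - 1)\<^sup>2 * (norm (G S V 1 x))\<^sup>2\<bar>
         \<le> 2 * M1 x * M2 x * \<bar>l - 1\<bar>^3 + (M2 x)\<^sup>2 * (l - 1)^4"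
      using AEb
    proof eventually_elim
      case (elim x)
      show ?case
        using pointwise[of "\<lambda>t. resp S V t x" "\<lambda>t. G S V t x" "\<lambda>t. G2 S V t x" \<delta> "M1 x" "M2 x" l,
            OF hvd_resp hvd_G] elim l by auto
    qed
    have ms: "(\<lambda>x. shift S V x l) \<in> borel_measurable P" by (rule meas_shift[OF mS mV])
    have intS: "integrable P (\<lambda>x. shift S V x l)"
    proof (rule Bochner_Integration.integrable_bound[OF intN ms])
      show "AE x in P. norm (shift S V x l) \<le> norm (((M1 x)\<^sup>2 + (M2 x)\<^sup>2) / N)"
        using ptw
      proof eventually_elim
        case (elim x)
        have "norm (resp S V l x - resp S V 1 x) \<le> M1 x" 
        proof -
          have "M1 x * \<bar>l - 1\<bar> \<le> M1 x" using l M1p[of x] by (intro mult_left_le) auto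
          then show ?thesis using elim by linarith
        qed
        then have "(norm (resp S V l x - resp S V 1 x))\<^sup>2 \<le> (M1 x)\<^sup>2" by (intro power_mono) auto
        then show ?case using N unfolding shift_def N_def[symmetric]
          by (simp add: divide_right_mono add_increasing2)
      qed
    qed
    define h where "h x = shift S V x l - (l - 1)\<^sup>2 * ((norm (G S V 1 x))\<^sup>2 / N)" for x
    have inth: "integrable P h" unfolding h_def by (intro Bochner_Integration.integrable_diff Bochner_Integration.integrable_mult_right intS intG)
    have eq: "mean_shift P S V l - \<Gamma> * (l - 1)\<^sup>2 = (\<integral>x. h x \<partial>P)"
    proof -
      have "(\<integral>x. h x \<partial>P) = (\<integral>x. shift S V x l \<partial>P) - (\<integral>x. (l - 1)\<^sup>2 * ((norm (G S V 1 x))\<^sup>2 / N) \<partial>P)"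
        unfolding h_def by (rule Bochner_Integration.integral_diff[OF intS]) (intro Bochner_Integration.integrable_mult_right intG)
      also have "(\<integral>x. (l - 1)\<^sup>2 * ((norm (G S V 1 x))\<^sup>2 / N) \<partial>P) = (l - 1)\<^sup>2 * \<Gamma>"
        unfolding \<Gamma>_def by (rule integral_mult_right_zero)
      finally show ?thesis unfolding mean_shift_def by (simp add: mult.commute)
    qed
    define b where "b x = (2 * \<bar>l - 1\<bar>^3 / N) * ((M1 x)\<^sup>2 + (M2 x)\<^sup>2)" for x
    have intb: "integrable P b" unfolding b_def using int by simp
    have hb: "AE x in P. \<bar>h x\<bar> \<le> b x"
      using ptw
    proof eventually_elim
      case (elim x)
      have l1: "\<bar>l - 1\<bar> \<le> 1" using l by simp
      have "\<bar>h x\<bar> = \<bar>(norm (resp S V l x - resp S V 1 x))\<^sup>2 - (l - 1)\<^sup>2 * (norm (G S V 1 x))\<^sup>2\<bar> / N"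
        unfolding h_def shift_def N_def[symmetric] using N by (simp add: field_simps)
      also have "\<dots> \<le> (2 * M1 x * M2 x * \<bar>l - 1\<bar>^3 + (M2 x)\<^sup>2 * (l - 1)^4) / N"
        using elim N by (simp add: divide_right_mono)
      also have "\<dots> \<le> b x"
      proof -
        have a1: "2 * M1 x * M2 x \<le> (M1 x)\<^sup>2 + (M2 x)\<^sup>2" by (rule sum_squares_bound)
        have "(l - 1)^4 = \<bar>(l - 1)^4\<bar>" by simp
        also have "\<dots> = \<bar>l - 1\<bar>^4" by (simp only: power_abs)
        also have "\<dots> = \<bar>l - 1\<bar>^3 * \<bar>l - 1\<bar>" by (simp only: power4_eq_xxxx power3_eq_cube)
        also have "\<dots> \<le> \<bar>l - 1\<bar>^3" using l1 by (simp add: mult_left_le)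
        finally have a2: "(M2 x)\<^sup>2 * (l - 1)^4 \<le> (M2 x)\<^sup>2 * \<bar>l - 1\<bar>^3" by (intro mult_left_mono) auto
        have a3: "(M2 x)\<^sup>2 * \<bar>l - 1\<bar>^3 \<le> ((M1 x)\<^sup>2 + (M2 x)\<^sup>2) * \<bar>l - 1\<bar>^3"
          by (intro mult_right_mono) auto
        have a4: "2 * M1 x * M2 x * \<bar>l - 1\<bar>^3 \<le> ((M1 x)\<^sup>2 + (M2 x)\<^sup>2) * \<bar>l - 1\<bar>^3"
          using a1 by (intro mult_right_mono) auto
        have "2 * M1 x * M2 x * \<bar>l - 1\<bar>^3 + (M2 x)\<^sup>2 * (l - 1)^4 \<le> 2 * \<bar>l - 1\<bar>^3 * ((M1 x)\<^sup>2 + (M2 x)\<^sup>2)"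
        proof -
          have rhs: "2 * \<bar>l - 1\<bar>^3 * ((M1 x)\<^sup>2 + (M2 x)\<^sup>2) = ((M1 x)\<^sup>2 + (M2 x)\<^sup>2) * \<bar>l - 1\<bar>^3 + ((M1 x)\<^sup>2 + (M2 x)\<^sup>2) * \<bar>l - 1\<bar>^3"
            by (simp add: algebra_simps)
          show ?thesis using a2 a3 a4 rhs by linarith
        qed
        then show ?thesis using N by (simp add: b_def divide_right_mono)
      qed
      finally show ?case .
    qed
    have "(\<integral>x. h x \<partial>P) \<le> (\<integral>x. b x \<partial>P)"
      by (rule integral_mono_AE[OF inth intb]) (use hb in auto)
    moreover have "- (\<integral>x. h x \<partial>P) \<le> (\<integral>x. b x \<partial>P)"
    proof -
      have "(\<integral>x. - h x \<partial>P) \<le> (\<integral>x. b x \<partial>P)"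
        by (rule integral_mono_AE) (use inth intb hb in auto)
      then show ?thesis by simp
    qed
    moreover have "(\<integral>x. b x \<partial>P) = (2 * K / N) * \<bar>l - 1\<bar>^3"
      unfolding b_def K_def by simp
    ultimately show ?thesis unfolding eq by linarith
  qed
  then show ?thesis by blast
qed

lemma cubic_le:
  fixes x C c :: real
  assumes "\<bar>x\<bar> * (\<bar>C\<bar> + 1) < c"
  shows "C * \<bar>x\<bar>^3 < c * x\<^sup>2 \<or> x = 0"
proof (cases "x = 0")
  case False
  have x2: "x\<^sup>2 > 0" using False by simp
  have h3: "\<bar>x\<bar>^3 = \<bar>x\<bar> * x\<^sup>2"
  proof -
    have "\<bar>x\<bar>^3 = \<bar>x\<bar> * \<bar>x\<bar>\<^sup>2" by (simp only: power3_eq_cube power2_eq_square)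
    then show ?thesis by simp
  qed
  have "C * \<bar>x\<bar>^3 \<le> \<bar>C\<bar> * \<bar>x\<bar>^3" by (intro mult_right_mono) auto
  then have "C * \<bar>x\<bar>^3 \<le> \<bar>C\<bar> * \<bar>x\<bar> * x\<^sup>2" unfolding h3 by (simp add: mult.assoc)
  also have "\<dots> < c * x\<^sup>2"
    using assms x2 by (intro mult_strict_right_mono) (auto simp: algebra_simps)
  finally show ?thesis by simp
qed simp

lemma small_o_of_cubic:
  fixes f :: "real \<Rightarrow> real"
  assumes e: "e > 0" and b: "\<forall>l. \<bar>l - 1\<bar> < e \<longrightarrow> \<bar>f l - \<Gamma> * (l - 1)\<^sup>2\<bar> \<le> C * \<bar>l - 1\<bar>^3"
  shows "(\<lambda>l. f l - \<Gamma> * (l - 1)\<^sup>2) \<in> o[at 1](\<lambda>l. (l - 1)\<^sup>2)"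
proof (rule landau_o.smallI)
  fix c :: real assume c: "c > 0"
  define d where "d = min e (c / (\<bar>C\<bar> + 1))"
  have d: "d > 0" unfolding d_def using e c by (simp add: add_pos_nonneg)
  show "\<forall>\<^sub>F l in at 1. norm (f l - \<Gamma> * (l - 1)\<^sup>2) \<le> c * norm ((l - 1)\<^sup>2)"
  proof -
  have "norm (f l - \<Gamma> * (l - 1)\<^sup>2) \<le> c * norm ((l - 1)\<^sup>2)" if "l \<noteq> 1 \<and> dist l 1 < d" for l
  proof -
    from that have l: "l \<noteq> 1" "\<bar>l - 1\<bar> < e" "\<bar>l - 1\<bar> < c / (\<bar>C\<bar> + 1)"
      unfolding d_def dist_real_def by auto
    have "\<bar>l - 1\<bar> * (\<bar>C\<bar> + 1) < c" using l(3) by (simp add: pos_less_divide_eq add_pos_nonneg)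
    then have "C * \<bar>l - 1\<bar>^3 < c * (l - 1)\<^sup>2" using cubic_le[of "l - 1" C c] l(1) by auto
    then show "norm (f l - \<Gamma> * (l - 1)\<^sup>2) \<le> c * norm ((l - 1)\<^sup>2)" using b l(2) by auto
  qed
  then show ?thesis unfolding eventually_at using d by blast
  qed
qed

lemma separation:
  fixes f g :: "real \<Rightarrow> real"
  assumes e: "e > 0" and bf: "\<forall>l. \<bar>l - 1\<bar> < e \<longrightarrow> \<bar>f l - \<Gamma>f * (l - 1)\<^sup>2\<bar> \<le> Cf * \<bar>l - 1\<bar>^3"
    and bg: "\<forall>l. \<bar>l - 1\<bar> < e \<longrightarrow> \<bar>g l - \<Gamma>g * (l - 1)\<^sup>2\<bar> \<le> Cg * \<bar>l - 1\<bar>^3"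
    and ne: "\<Gamma>f \<noteq> \<Gamma>g"
  shows "\<exists>\<epsilon>>0. \<forall>l. 0 < \<bar>l - 1\<bar> \<and> \<bar>l - 1\<bar> < \<epsilon> \<longrightarrow> f l \<noteq> g l"
proof -
  define c where "c = \<bar>\<Gamma>f - \<Gamma>g\<bar>"
  have c: "c > 0" unfolding c_def using ne by simp
  define C where "C = Cf + Cg"
  define \<epsilon> where "\<epsilon> = min e (c / (\<bar>C\<bar> + 1))"
  have "\<epsilon> > 0" unfolding \<epsilon>_def using e c by (simp add: add_pos_nonneg)
  moreover have "f l \<noteq> g l" if l: "0 < \<bar>l - 1\<bar>" "\<bar>l - 1\<bar> < \<epsilon>" for l
  proof
    assume eq: "f l = g l"
    have l2: "\<bar>l - 1\<bar> < e" "\<bar>l - 1\<bar> < c / (\<bar>C\<bar> + 1)" using l unfolding \<epsilon>_def by auto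
    have "\<bar>l - 1\<bar> * (\<bar>C\<bar> + 1) < c" using l2(2) by (simp add: pos_less_divide_eq add_pos_nonneg)
    then have lt: "C * \<bar>l - 1\<bar>^3 < c * (l - 1)\<^sup>2" using cubic_le[of "l - 1" C c] l(1) by auto
    have "c * (l - 1)\<^sup>2 = \<bar>(\<Gamma>f - \<Gamma>g) * (l - 1)\<^sup>2\<bar>" unfolding c_def by (simp add: abs_mult)
    also have "\<dots> = \<bar>(g l - \<Gamma>g * (l - 1)\<^sup>2) - (f l - \<Gamma>f * (l - 1)\<^sup>2)\<bar>" using eq by (simp add: algebra_simps)
    also have "\<dots> \<le> C * \<bar>l - 1\<bar>^3" 
    proof -
      have "\<bar>(g l - \<Gamma>g * (l - 1)\<^sup>2) - (f l - \<Gamma>f * (l - 1)\<^sup>2)\<bar> \<le> \<bar>g l - \<Gamma>g * (l - 1)\<^sup>2\<bar> + \<bar>f l - \<Gamma>f * (l - 1)\<^sup>2\<bar>"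
        by (rule abs_triangle_ineq4)
      also have "\<dots> \<le> Cg * \<bar>l - 1\<bar>^3 + Cf * \<bar>l - 1\<bar>^3" using bf bg l2(1) by (intro add_mono) auto
      finally show ?thesis by (simp add: C_def algebra_simps)
    qed
    finally show False using lt by simp
  qed
  ultimately show ?thesis by blast
qed

theorem theorem3p1:
  fixes Pben Pbd :: "'x measure"
    and S :: "'x \<Rightarrow> real ^ 'm ^ 'n" and V :: "'x \<Rightarrow> real ^ 'dv ^ 'm"
    and M1 M2 :: "'x \<Rightarrow> real" and \<delta> :: real
  assumes "prob_space Pben" and "prob_space Pbd"
    and "sets Pbd = sets Pben"
    and "S \<in> borel_measurable Pben" and "V \<in> borel_measurable Pben"
    and "\<delta> > 0"
    and "M1 \<in> borel_measurable Pben" and "M2 \<in> borel_measurable Pben"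
    and "\<And>x. M1 x \<ge> 0" and "\<And>x. M2 x \<ge> 0"
    and "\<And>P. P \<in> {Pben, Pbd} \<Longrightarrow> AE x in P. \<forall>l\<in>{1-\<delta><..<1+\<delta>}.
           norm (vector_derivative (\<lambda>t. resp S V t x) (at l)) \<le> M1 x \<and>
           norm (vector_derivative (\<lambda>u. vector_derivative (\<lambda>t. resp S V t x) (at u)) (at l)) \<le> M2 x"
    and "\<And>P. P \<in> {Pben, Pbd} \<Longrightarrow> integrable P (\<lambda>x. (M1 x)\<^sup>2 + (M2 x)\<^sup>2)"
  shows "\<exists>\<Gamma>ben \<Gamma>bd.
      (\<lambda>l. mean_shift Pben S V l - \<Gamma>ben * (l - 1)\<^sup>2) \<in> o[at 1](\<lambda>l. (l - 1)\<^sup>2) \<and>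
      (\<lambda>l. mean_shift Pbd S V l - \<Gamma>bd * (l - 1)\<^sup>2) \<in> o[at 1](\<lambda>l. (l - 1)\<^sup>2) \<and>
      (\<Gamma>ben \<noteq> \<Gamma>bd \<longrightarrow>
         (\<exists>\<epsilon>>0. \<forall>l. 0 < \<bar>l - 1\<bar> \<and> \<bar>l - 1\<bar> < \<epsilon> \<longrightarrow> mean_shift Pbd S V l \<noteq> mean_shift Pben S V l))"
proof -
  have mS2: "S \<in> borel_measurable Pbd" "V \<in> borel_measurable Pbd"
      "M1 \<in> borel_measurable Pbd" "M2 \<in> borel_measurable Pbd"
    using assms(4,5,7,8) measurable_cong_sets[OF assms(3) refl] by auto
  have AE': "AE x in P. \<forall>l\<in>{1-\<delta><..<1+\<delta>}. norm (G S V l x) \<le> M1 x \<and> norm (G2 S V l x) \<le> M2 x"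
    if "P \<in> {Pben, Pbd}" for P
    using assms(11)[OF that] by (simp only: vd1 vector_derivative_at[OF hvd_G])
  obtain \<Gamma>b Cb where b: "\<forall>l. \<bar>l - 1\<bar> < min \<delta> 1 \<longrightarrow> \<bar>mean_shift Pben S V l - \<Gamma>b * (l - 1)\<^sup>2\<bar> \<le> Cb * \<bar>l - 1\<bar>^3"
    using core[OF assms(1,4,5,6,7,8,9,10) AE'[of Pben] assms(12)[of Pben]] by auto
  obtain \<Gamma>d Cd where d: "\<forall>l. \<bar>l - 1\<bar> < min \<delta> 1 \<longrightarrow> \<bar>mean_shift Pbd S V l - \<Gamma>d * (l - 1)\<^sup>2\<bar> \<le> Cd * \<bar>l - 1\<bar>^3"
    using core[OF assms(2) mS2(1,2) assms(6) mS2(3,4) assms(9,10) AE'[of Pbd] assms(12)[of Pbd]] by auto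
  have e: "min \<delta> 1 > 0" using assms(6) by simp
  show ?thesis
  proof (rule exI[of _ \<Gamma>b], rule exI[of _ \<Gamma>d], intro conjI impI)
    show "(\<lambda>l. mean_shift Pben S V l - \<Gamma>b * (l - 1)\<^sup>2) \<in> o[at 1](\<lambda>l. (l - 1)\<^sup>2)"
      by (rule small_o_of_cubic[OF e b])
    show "(\<lambda>l. mean_shift Pbd S V l - \<Gamma>d * (l - 1)\<^sup>2) \<in> o[at 1](\<lambda>l. (l - 1)\<^sup>2)"
      by (rule small_o_of_cubic[OF e d])
    assume "\<Gamma>b \<noteq> \<Gamma>d"
    then show "\<exists>\<epsilon>>0. \<forall>l. 0 < \<bar>l - 1\<bar> \<and> \<bar>l - 1\<bar> < \<epsilon> \<longrightarrow> mean_shift Pbd S V l \<noteq> mean_shift Pben S V l"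
      using separation[OF e d b] by auto
  qed
qed

end
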